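(* Let $\mathcal{A}$ be a semiprime unital algebra over a field $F$ with $\operatorname{char}(F)\neq2$. Then $\operatorname{QJCent}(\mathcal{A})=\operatorname{Cent}(\mathcal{A})$.
   Context: $\mathcal{A}$ is semiprime if $a\mathcal{A}a=\{0\}$ implies $a=0$. $x\circ y=xy+yx$. $\operatorname{QJCent}(\mathcal{A})$: linear $f:\mathcal{A}\to\mathcal{A}$ with $f(x)\circ y=x\circ f(y)$ for all $x,y$. $\operatorname{Cent}(\mathcal{A})$: linear $f$ with $f(xy)=f(x)y=xf(y)$ for all $x,y$. *)

theory Defs
  imports Complex_Main
begin

text \<open>An associative unital algebra over a field 'k is modelled by a type
'a of class ring_1 together with a scalar multiplication scale making 'a a
'k-vector space such that multiplication is 'k-bilinear (see algebra_over).\<close>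

definition algebra_over :: "('k::field \<Rightarrow> 'a::ring_1 \<Rightarrow> 'a) \<Rightarrow> bool" where
  "algebra_over scale \<longleftrightarrow> Vector_Spaces.vector_space scale \<and>
     (\<forall>c x y. scale c (x * y) = scale c x * y \<and> scale c (x * y) = x * scale c y)"

definition semiprime :: "'a::ring itself \<Rightarrow> bool" where
  "semiprime _ \<longleftrightarrow> (\<forall>a::'a. (\<forall>x. a * x * a = 0) \<longrightarrow> a = 0)"

definition jordan_prod :: "'a::ring \<Rightarrow> 'a \<Rightarrow> 'a" (infixl "\<circ>\<^sub>J" 70) where
  "x \<circ>\<^sub>J y = x * y + y * x"

definition QJCent :: "('k::field \<Rightarrow> 'a::ring_1 \<Rightarrow> 'a) \<Rightarrow> ('a \<Rightarrow> 'a) set" where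
  "QJCent scale = {f. Vector_Spaces.linear scale scale f \<and>
      (\<forall>x y. f x \<circ>\<^sub>J y = x \<circ>\<^sub>J f y)}"

definition Cent :: "('k::field \<Rightarrow> 'a::ring_1 \<Rightarrow> 'a) \<Rightarrow> ('a \<Rightarrow> 'a) set" where
  "Cent scale = {f. Vector_Spaces.linear scale scale f \<and>
      (\<forall>x y. f (x * y) = f x * y \<and> f (x * y) = x * f y)}"

end

theory Submission
  imports Defs
begin

lemma comm_central:
  fixes c :: "'a::ring_1"
  assumes sp: "semiprime TYPE('a)"
    and h: "\<And>x y. c * (x*y - y*x) = (x*y - y*x) * c"
  shows "c * x = x * c"
proof -
  have s1: "(x*y - y*x) * (c*x - x*c) = 0" for x y
  proof -
    have "c * (x*(y*x) - (y*x)*x) = (x*(y*x) - (y*x)*x) * c" by (rule h)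
    moreover have "x*(y*x) - (y*x)*x = (x*y - y*x)*x" by (simp add: algebra_simps)
    ultimately have e: "c * ((x*y - y*x)*x) = (x*y - y*x)*x*c" by simp
    have "c * ((x*y - y*x)*x) = (x*y - y*x)*c*x" using h[of x y] by (metis mult.assoc)
    with e have "(x*y - y*x)*c*x = (x*y - y*x)*x*c" by simp
    then show ?thesis by (simp add: algebra_simps)
  qed
  have s2: "(x*y - y*x) * z * (c*x - x*c) = 0" for x y z
  proof -
    have "(x*(y*z) - (y*z)*x) * (c*x - x*c) = 0" by (rule s1)
    moreover have "x*(y*z) - (y*z)*x = (x*y - y*x)*z + y*(x*z - z*x)" by (simp add: algebra_simps)
    ultimately have "(x*y - y*x)*z*(c*x - x*c) + y*((x*z - z*x)*(c*x - x*c)) = 0"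
      by (simp add: algebra_simps)
    then show ?thesis using s1[of x z] by simp
  qed
  have "(c*x - x*c) * z * (c*x - x*c) = 0" for z
  proof -
    have "(x*c - c*x) * z * (c*x - x*c) = 0" by (rule s2)
    moreover have "(c*x - x*c) = - (x*c - c*x)" by simp
    ultimately show ?thesis by (metis minus_mult_left neg_equal_0_iff_equal)
  qed
  then have "c*x - x*c = 0" using sp unfolding semiprime_def by blast
  then show ?thesis by simp
qed

theorem proposition3p5:
  fixes scale :: "'k::field \<Rightarrow> 'a::ring_1 \<Rightarrow> 'a"
  assumes "algebra_over scale"
    and "semiprime TYPE('a)"
    and "(2::'k) \<noteq> 0"
  shows "QJCent scale = Cent scale"
proof -
  have vs: "Vector_Spaces.vector_space scale" and bil: "\<And>c x y. scale c (x * y) = scale c x * y"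
    and bil2: "\<And>c x y. scale c (x * y) = x * scale c y"
    using assms(1) unfolding algebra_over_def by metis+
  have md: "module scale" using vs by (simp add: vector_space_def module_def)
  define h where "h = scale (1/2) (1::'a)"
  have hx: "h * x = scale (1/2) x" for x using bil[of "1/2" 1 x] by (simp add: h_def)
  have xh: "x * h = scale (1/2) x" for x using bil2[of "1/2" x 1] by (simp add: h_def)
  have h2: "h * (x + x) = x" for x
  proof -
    have "h * (x + x) = scale (1/2) x + scale (1/2) x"
      using hx by (simp add: module.scale_right_distrib[OF md])
    also have "\<dots> = scale (1/2 + 1/2) x"
      by (rule module.scale_left_distrib[OF md, symmetric])
    also have "(1/2 + 1/2 :: 'k) = 1" using assms(3) by (metis add_divide_distrib divide_self_if one_add_one)
    also have "scale 1 x = x" by (simp add: module.scale_one[OF md])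
    finally show ?thesis .
  qed
  show ?thesis
  proof
    show "QJCent scale \<subseteq> Cent scale"
    proof
      fix f assume "f \<in> QJCent scale"
      then have lin: "Vector_Spaces.linear scale scale f" and q: "\<And>x y. f x \<circ>\<^sub>J y = x \<circ>\<^sub>J f y"
        unfolding QJCent_def by auto
      define c where "c = f 1"
      have fx: "f x + f x = x * c + c * x" for x
        using q[of x 1] by (simp add: jordan_prod_def c_def)
      have cc: "c * (x*y - y*x) = (x*y - y*x) * c" for x y
      proof -
        have "(f x + f x) * y + y * (f x + f x) = x * (f y + f y) + (f y + f y) * x"
          using q[of x y] by (simp add: jordan_prod_def algebra_simps)
        then have "(x * c + c * x) * y + y * (x * c + c * x) = x * (y * c + c * y) + (y * c + c * y) * x"
          by (simp add: fx)
        then show ?thesis by (simp add: algebra_simps)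
      qed
      have cent: "c * x = x * c" for x by (rule comm_central[OF assms(2) cc])
      have ff: "f x = h * (c * x + c * x)" for x
        using h2[of "f x"] fx[of x] cent[of x] by simp
      have hc: "h * z = z * h" for z using hx xh by simp
      have "f (x * y) = f x * y \<and> f (x * y) = x * f y" for x y
      proof
        show "f (x * y) = f x * y" unfolding ff by (simp add: algebra_simps)
        have "x * f y = x * h * (c * y + c * y)" unfolding ff by (simp add: mult.assoc)
        also have "\<dots> = h * (x * c * y + x * c * y)" by (simp add: hc algebra_simps)
        also have "\<dots> = h * (c * (x * y) + c * (x * y))" by (simp add: cent mult.assoc[symmetric])
        finally show "f (x * y) = x * f y" unfolding ff by simp
      qed
      then show "f \<in> Cent scale" using lin unfolding Cent_def mem_Collect_eq by blast
    qed
  next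
    show "Cent scale \<subseteq> QJCent scale"
    proof
      fix f assume "f \<in> Cent scale"
      then have lin: "Vector_Spaces.linear scale scale f" and q: "\<And>x y. f (x * y) = f x * y \<and> f (x * y) = x * f y"
        unfolding Cent_def mem_Collect_eq by blast+
      have "f x \<circ>\<^sub>J y = x \<circ>\<^sub>J f y" for x y
        unfolding jordan_prod_def using q[of x y] q[of y x] by metis
      then show "f \<in> QJCent scale" using lin unfolding QJCent_def mem_Collect_eq by blast
    qed
  qed
qed

end
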